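(* Let $f\in R=D[t;\sigma,\delta]$ be monic of degree $m\ge 2$. Then $f$ is right semi-invariant if and only if $D\subseteq \mathrm{Nuc}_r(S_f)$. In particular, if $f$ is right semi-invariant, then either $\mathrm{Nuc}(S_f)=D$ or $S_f$ is associative.
   Context: $D$ is an associative division ring with center $F$, $\sigma$ is a ring endomorphism of $D$ and $\delta$ is a left $\sigma$-derivation of $D$ (additive with $\delta(ab)=\sigma(a)\delta(b)+\delta(a)b$). $R=D[t;\sigma,\delta]$ is the skew polynomial ring of polynomials $\sum a_it^i$, $a_i\in D$, with multiplication determined by $ta=\sigma(a)t+\delta(a)$. For monic $f$ of degree $m$, every $g\in R$ can be written uniquely as $g=qf+r$ with $\deg r<m$; write $r=g\ \mathrm{mod}_r f$. The Petit algebra $S_f$ is the set of elements of $R$ of degree $<m$ with multiplication $g\circ h=gh\ \mathrm{mod}_r f$; it is a unital nonassociative ring. For a ring $A$ with associator $[x,y,z]=(xy)z-x(yz)$: $\mathrm{Nuc}_l(A)=\{x:[x,A,A]=0\}$, $\mathrm{Nuc}_m(A)=\{x:[A,x,A]=0\}$, $\mathrm{Nuc}_r(A)=\{x:[A,A,x]=0\}$, and $\mathrm{Nuc}(A)$ is their intersection. $D$ is viewed inside $S_f$ as the polynomials of degree $0$. $f$ is called right semi-invariant if $fD\subseteq Df$, i.e. for every $a\in D$ there is $b\in D$ with $f(t)a=bf(t)$. *)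

theory Defs
  imports Main
begin

text \<open>Skew polynomials over a division ring 'a are represented by their coefficient
  functions nat \<Rightarrow> 'a (coefficient of t^i) with finite support.\<close>

definition finsupp :: "(nat \<Rightarrow> 'a::zero) \<Rightarrow> bool" where
  "finsupp p \<longleftrightarrow> finite {i. p i \<noteq> 0}"

definition deg_less :: "(nat \<Rightarrow> 'a::zero) \<Rightarrow> nat \<Rightarrow> bool" where
  "deg_less p m \<longleftrightarrow> (\<forall>i\<ge>m. p i = 0)"

definition monic_deg :: "(nat \<Rightarrow> 'a::{zero,one}) \<Rightarrow> nat \<Rightarrow> bool" where
  "monic_deg f m \<longleftrightarrow> f m = 1 \<and> (\<forall>i>m. f i = 0)"

definition ring_endo :: "('a::ring_1 \<Rightarrow> 'a) \<Rightarrow> bool" where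
  "ring_endo \<sigma> \<longleftrightarrow> (\<forall>a b. \<sigma> (a + b) = \<sigma> a + \<sigma> b) \<and> (\<forall>a b. \<sigma> (a * b) = \<sigma> a * \<sigma> b) \<and> \<sigma> 1 = 1"

definition left_sigma_derivation :: "('a::ring_1 \<Rightarrow> 'a) \<Rightarrow> ('a \<Rightarrow> 'a) \<Rightarrow> bool" where
  "left_sigma_derivation \<sigma> \<delta> \<longleftrightarrow> (\<forall>a b. \<delta> (a + b) = \<delta> a + \<delta> b) \<and>
     (\<forall>a b. \<delta> (a * b) = \<sigma> a * \<delta> b + \<delta> a * b)"

definition sconst :: "'a::zero \<Rightarrow> nat \<Rightarrow> 'a" where
  "sconst a = (\<lambda>k. if k = 0 then a else 0)"

text \<open>left multiplication by t, using t a = sigma(a) t + delta(a)\<close>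
definition tmul :: "('a::ring_1 \<Rightarrow> 'a) \<Rightarrow> ('a \<Rightarrow> 'a) \<Rightarrow> (nat \<Rightarrow> 'a) \<Rightarrow> nat \<Rightarrow> 'a" where
  "tmul \<sigma> \<delta> p = (\<lambda>k. (if k = 0 then 0 else \<sigma> (p (k - 1))) + \<delta> (p k))"

text \<open>product in D[t;sigma,delta]: (sum a_i t^i) q = sum a_i (t^i q)\<close>
definition skmult :: "('a::ring_1 \<Rightarrow> 'a) \<Rightarrow> ('a \<Rightarrow> 'a) \<Rightarrow> (nat \<Rightarrow> 'a) \<Rightarrow> (nat \<Rightarrow> 'a) \<Rightarrow> nat \<Rightarrow> 'a" where
  "skmult \<sigma> \<delta> p q = (\<lambda>k. \<Sum>i\<in>{i. p i \<noteq> 0}. p i * ((tmul \<sigma> \<delta> ^^ i) q) k)"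

definition rmod :: "('a::ring_1 \<Rightarrow> 'a) \<Rightarrow> ('a \<Rightarrow> 'a) \<Rightarrow> (nat \<Rightarrow> 'a) \<Rightarrow> nat \<Rightarrow> (nat \<Rightarrow> 'a) \<Rightarrow> nat \<Rightarrow> 'a" where
  "rmod \<sigma> \<delta> f m g = (THE r. deg_less r m \<and>
      (\<exists>q. finsupp q \<and> g = (\<lambda>k. skmult \<sigma> \<delta> q f k + r k)))"

definition petit_carrier :: "nat \<Rightarrow> (nat \<Rightarrow> 'a::zero) set" where
  "petit_carrier m = {p. deg_less p m}"

definition pmult :: "('a::ring_1 \<Rightarrow> 'a) \<Rightarrow> ('a \<Rightarrow> 'a) \<Rightarrow> (nat \<Rightarrow> 'a) \<Rightarrow> nat \<Rightarrow> (nat \<Rightarrow> 'a) \<Rightarrow> (nat \<Rightarrow> 'a) \<Rightarrow> nat \<Rightarrow> 'a" where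
  "pmult \<sigma> \<delta> f m g h = rmod \<sigma> \<delta> f m (skmult \<sigma> \<delta> g h)"

definition passoc :: "('a::ring_1 \<Rightarrow> 'a) \<Rightarrow> ('a \<Rightarrow> 'a) \<Rightarrow> (nat \<Rightarrow> 'a) \<Rightarrow> nat \<Rightarrow> (nat \<Rightarrow> 'a) \<Rightarrow> (nat \<Rightarrow> 'a) \<Rightarrow> (nat \<Rightarrow> 'a) \<Rightarrow> nat \<Rightarrow> 'a" where
  "passoc \<sigma> \<delta> f m x y z = (\<lambda>k. pmult \<sigma> \<delta> f m (pmult \<sigma> \<delta> f m x y) z k - pmult \<sigma> \<delta> f m x (pmult \<sigma> \<delta> f m y z) k)"

definition nuc_l :: "('a::ring_1 \<Rightarrow> 'a) \<Rightarrow> ('a \<Rightarrow> 'a) \<Rightarrow> (nat \<Rightarrow> 'a) \<Rightarrow> nat \<Rightarrow> (nat \<Rightarrow> 'a) set" where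
  "nuc_l \<sigma> \<delta> f m = {x \<in> petit_carrier m. \<forall>y\<in>petit_carrier m. \<forall>z\<in>petit_carrier m. passoc \<sigma> \<delta> f m x y z = (\<lambda>k. 0)}"

definition nuc_m :: "('a::ring_1 \<Rightarrow> 'a) \<Rightarrow> ('a \<Rightarrow> 'a) \<Rightarrow> (nat \<Rightarrow> 'a) \<Rightarrow> nat \<Rightarrow> (nat \<Rightarrow> 'a) set" where
  "nuc_m \<sigma> \<delta> f m = {x \<in> petit_carrier m. \<forall>y\<in>petit_carrier m. \<forall>z\<in>petit_carrier m. passoc \<sigma> \<delta> f m y x z = (\<lambda>k. 0)}"

definition nuc_r :: "('a::ring_1 \<Rightarrow> 'a) \<Rightarrow> ('a \<Rightarrow> 'a) \<Rightarrow> (nat \<Rightarrow> 'a) \<Rightarrow> nat \<Rightarrow> (nat \<Rightarrow> 'a) set" where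
  "nuc_r \<sigma> \<delta> f m = {x \<in> petit_carrier m. \<forall>y\<in>petit_carrier m. \<forall>z\<in>petit_carrier m. passoc \<sigma> \<delta> f m y z x = (\<lambda>k. 0)}"

definition nuc :: "('a::ring_1 \<Rightarrow> 'a) \<Rightarrow> ('a \<Rightarrow> 'a) \<Rightarrow> (nat \<Rightarrow> 'a) \<Rightarrow> nat \<Rightarrow> (nat \<Rightarrow> 'a) set" where
  "nuc \<sigma> \<delta> f m = nuc_l \<sigma> \<delta> f m \<inter> nuc_m \<sigma> \<delta> f m \<inter> nuc_r \<sigma> \<delta> f m"

definition petit_associative :: "('a::ring_1 \<Rightarrow> 'a) \<Rightarrow> ('a \<Rightarrow> 'a) \<Rightarrow> (nat \<Rightarrow> 'a) \<Rightarrow> nat \<Rightarrow> bool" where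
  "petit_associative \<sigma> \<delta> f m \<longleftrightarrow> (\<forall>x\<in>petit_carrier m. \<forall>y\<in>petit_carrier m. \<forall>z\<in>petit_carrier m. passoc \<sigma> \<delta> f m x y z = (\<lambda>k. 0))"

definition right_semi_invariant :: "('a::ring_1 \<Rightarrow> 'a) \<Rightarrow> ('a \<Rightarrow> 'a) \<Rightarrow> (nat \<Rightarrow> 'a) \<Rightarrow> bool" where
  "right_semi_invariant \<sigma> \<delta> f \<longleftrightarrow> (\<forall>a. \<exists>b. skmult \<sigma> \<delta> f (sconst a) = skmult \<sigma> \<delta> (sconst b) f)"

end

theory Submission imports Defs begin

definition mon :: "nat \<Rightarrow> nat \<Rightarrow> 'a::zero_neq_one" where
  "mon j = (\<lambda>k. if k = j then 1 else 0)"

lemma finsupp_iff: "finsupp p \<longleftrightarrow> (\<exists>N. deg_less p N)"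
proof
  assume "finsupp p"
  then obtain N where "{i. p i \<noteq> 0} \<subseteq> {..<N}"
    unfolding finsupp_def by (auto simp: finite_nat_set_iff_bounded)
  then have "deg_less p N" unfolding deg_less_def by force
  then show "\<exists>N. deg_less p N" ..
next
  assume "\<exists>N. deg_less p N"
  then obtain N where "deg_less p N" ..
  then have "{i. p i \<noteq> 0} \<subseteq> {..<N}" unfolding deg_less_def by (auto simp: not_less[symmetric])
  then show "finsupp p" unfolding finsupp_def using finite_subset by blast
qed

lemma deg_lessD: "deg_less p N \<Longrightarrow> N \<le> i \<Longrightarrow> p i = 0"
  unfolding deg_less_def by blast

lemma deg_less_mono: "deg_less p N \<Longrightarrow> N \<le> M \<Longrightarrow> deg_less p M"
  unfolding deg_less_def by auto

lemma deg_less_finsupp: "deg_less p N \<Longrightarrow> finsupp p"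
  using finsupp_iff by blast

lemma deg_less_add: "deg_less (p::nat\<Rightarrow>'a::ring) N \<Longrightarrow> deg_less q N \<Longrightarrow> deg_less (\<lambda>k. p k + q k) N"
  unfolding deg_less_def by auto
lemma deg_less_diff: "deg_less (p::nat\<Rightarrow>'a::ring) N \<Longrightarrow> deg_less q N \<Longrightarrow> deg_less (\<lambda>k. p k - q k) N"
  unfolding deg_less_def by auto
lemma deg_less_smul: "deg_less p N \<Longrightarrow> deg_less (\<lambda>k. (c::'a::ring) * p k) N"
  unfolding deg_less_def by auto

lemma finsupp_common:
  assumes "finsupp p" "finsupp q" obtains N where "deg_less p N" "deg_less q N"
proof -
  obtain N1 where "deg_less p N1" using assms finsupp_iff by blast
  moreover obtain N2 where "deg_less q N2" using assms finsupp_iff by blast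
  ultimately show ?thesis using that[of "max N1 N2"] deg_less_mono by (metis max.cobounded1 max.cobounded2)
qed

lemma finsupp_add: "finsupp (p::nat\<Rightarrow>'a::ring) \<Longrightarrow> finsupp q \<Longrightarrow> finsupp (\<lambda>k. p k + q k)"
  by (metis finsupp_common deg_less_add deg_less_finsupp)
lemma finsupp_diff: "finsupp (p::nat\<Rightarrow>'a::ring) \<Longrightarrow> finsupp q \<Longrightarrow> finsupp (\<lambda>k. p k - q k)"
  by (metis finsupp_common deg_less_diff deg_less_finsupp)
lemma finsupp_smul: "finsupp p \<Longrightarrow> finsupp (\<lambda>k. (c::'a::ring) * p k)"
  using deg_less_smul finsupp_iff by metis

lemma deg_less_sconst: "deg_less (sconst a) (Suc 0)"
  unfolding deg_less_def sconst_def by auto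
lemma deg_less_mon: "deg_less (mon j) (Suc j)"
  unfolding deg_less_def mon_def by auto
lemma deg_less_zero: "deg_less (\<lambda>k. 0) N"
  unfolding deg_less_def by auto

locale skew =
  fixes \<sigma> \<delta> :: "'a::division_ring \<Rightarrow> 'a"
  assumes endo: "ring_endo \<sigma>" and der: "left_sigma_derivation \<sigma> \<delta>"
begin

abbreviation T where "T \<equiv> tmul \<sigma> \<delta>"
abbreviation mul where "mul \<equiv> skmult \<sigma> \<delta>"

lemma s_add: "\<sigma> (a + b) = \<sigma> a + \<sigma> b" using endo unfolding ring_endo_def by blast
lemma s_mult: "\<sigma> (a * b) = \<sigma> a * \<sigma> b" using endo unfolding ring_endo_def by blast
lemma s_one[simp]: "\<sigma> 1 = 1" using endo unfolding ring_endo_def by blast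
lemma s_zero[simp]: "\<sigma> 0 = 0" using s_add[of 0 0] by simp
lemma d_add: "\<delta> (a + b) = \<delta> a + \<delta> b" using der unfolding left_sigma_derivation_def by blast
lemma d_mult: "\<delta> (a * b) = \<sigma> a * \<delta> b + \<delta> a * b" using der unfolding left_sigma_derivation_def by blast
lemma d_zero[simp]: "\<delta> 0 = 0" using d_add[of 0 0] by simp
lemma d_one[simp]: "\<delta> 1 = 0" using d_mult[of 1 1] by simp
lemma s_minus: "\<sigma> (- a) = - \<sigma> a" using s_add[of a "-a"] by (simp add: eq_neg_iff_add_eq_0 add.commute)
lemma d_minus: "\<delta> (- a) = - \<delta> a" using d_add[of a "-a"] by (simp add: eq_neg_iff_add_eq_0 add.commute)
lemma s_diff: "\<sigma> (a - b) = \<sigma> a - \<sigma> b" using s_add[of a "-b"] s_minus by simp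
lemma d_diff: "\<delta> (a - b) = \<delta> a - \<delta> b" using d_add[of a "-b"] d_minus by simp

lemma sn_one[simp]: "(\<sigma> ^^ n) 1 = 1" by (induction n) auto

lemma T_add: "T (\<lambda>k. p k + q k) = (\<lambda>k. T p k + T q k)"
  unfolding tmul_def by (auto simp: s_add d_add algebra_simps)
lemma T_diff: "T (\<lambda>k. p k - q k) = (\<lambda>k. T p k - T q k)"
  unfolding tmul_def by (auto simp: s_diff d_diff algebra_simps)
lemma T_zero: "T (\<lambda>k. 0) = (\<lambda>k. 0)"
  unfolding tmul_def by auto
lemma T_smul: "T (\<lambda>k. c * q k) = (\<lambda>k. \<sigma> c * T q k + \<delta> c * q k)"
  unfolding tmul_def by (auto simp: s_mult d_mult algebra_simps)

lemma Tn_add: "(T ^^ n) (\<lambda>k. p k + q k) = (\<lambda>k. (T ^^ n) p k + (T ^^ n) q k)"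
  by (induction n) (auto simp: T_add)
lemma Tn_diff: "(T ^^ n) (\<lambda>k. p k - q k) = (\<lambda>k. (T ^^ n) p k - (T ^^ n) q k)"
  by (induction n) (auto simp: T_diff)
lemma Tn_zero: "(T ^^ n) (\<lambda>k. 0) = (\<lambda>k. 0)"
  by (induction n) (auto simp: T_zero)

lemma T_sum: "finite A \<Longrightarrow> T (\<lambda>k. \<Sum>i\<in>A. F i k) = (\<lambda>k. \<Sum>i\<in>A. T (F i) k)"
proof (induction A rule: finite_induct)
  case empty then show ?case by (simp add: T_zero)
next
  case (insert x F) then show ?case by (simp add: T_add)
qed

lemma deg_T: "deg_less q N \<Longrightarrow> deg_less (T q) (Suc N)"
  unfolding deg_less_def tmul_def by auto
lemma deg_Tn: "deg_less q N \<Longrightarrow> deg_less ((T ^^ n) q) (N + n)"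
  by (induction n) (auto dest: deg_T)
lemma T_top: "deg_less q (Suc M) \<Longrightarrow> T q (Suc M) = \<sigma> (q M)"
  unfolding deg_less_def tmul_def by auto
lemma Tn_top: "deg_less q (Suc M) \<Longrightarrow> (T ^^ n) q (M + n) = (\<sigma> ^^ n) (q M)"
proof (induction n)
  case 0 then show ?case by simp
next
  case (Suc n)
  have "deg_less ((T ^^ n) q) (Suc (M + n))" using deg_Tn[OF Suc.prems, of n] by simp
  then have "T ((T ^^ n) q) (Suc (M + n)) = \<sigma> ((T ^^ n) q (M + n))" by (rule T_top)
  then show ?case using Suc by simp
qed

lemma finsupp_T: "finsupp q \<Longrightarrow> finsupp (T q)"
  using deg_T finsupp_iff by blast
lemma finsupp_Tn: "finsupp q \<Longrightarrow> finsupp ((T ^^ n) q)"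
  using deg_Tn finsupp_iff by blast

lemma mul_bound: "deg_less p N \<Longrightarrow> mul p q k = (\<Sum>i<N. p i * (T ^^ i) q k)"
  unfolding skmult_def
proof (rule sum.mono_neutral_left)
  assume "deg_less p N"
  then show "{i. p i \<noteq> 0} \<subseteq> {..<N}" unfolding deg_less_def by (auto simp: not_less) (meson not_less)
qed auto

lemma mul_bound': "deg_less p N \<Longrightarrow> mul p q = (\<lambda>k. \<Sum>i<N. p i * (T ^^ i) q k)"
  using mul_bound by blast

lemma deg_mul: assumes "deg_less p N" "deg_less q (Suc M)" shows "deg_less (mul p q) (N + M)"
  unfolding deg_less_def
proof (intro allI impI)
  fix k assume k: "N + M \<le> k"
  have "\<forall>i<N. (T ^^ i) q k = 0"
  proof (intro allI impI)
    fix i assume "i < N"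
    then show "(T ^^ i) q k = 0" using deg_Tn[OF assms(2), of i] k deg_lessD by fastforce
  qed
  then show "mul p q k = 0" using mul_bound[OF assms(1)] by simp
qed

lemma finsupp_mul: "finsupp p \<Longrightarrow> finsupp q \<Longrightarrow> finsupp (mul p q)"
  by (meson deg_less_mono deg_mul finsupp_iff le_SucI order_refl)

lemma mul_add_left: assumes "finsupp p1" "finsupp p2"
  shows "mul (\<lambda>i. p1 i + p2 i) q = (\<lambda>k. mul p1 q k + mul p2 q k)"
proof -
  obtain N where "deg_less p1 N" "deg_less p2 N" using assms finsupp_common by blast
  moreover then have "deg_less (\<lambda>i. p1 i + p2 i) N" by (rule deg_less_add)
  ultimately show ?thesis using mul_bound'[of p1 N] mul_bound'[of p2 N] mul_bound'[of "\<lambda>i. p1 i + p2 i" N]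
    by (simp add: sum.distrib distrib_right)
qed

lemma mul_diff_left: assumes "finsupp p1" "finsupp p2"
  shows "mul (\<lambda>i. p1 i - p2 i) q = (\<lambda>k. mul p1 q k - mul p2 q k)"
proof -
  obtain N where "deg_less p1 N" "deg_less p2 N" using assms finsupp_common by blast
  moreover then have "deg_less (\<lambda>i. p1 i - p2 i) N" by (rule deg_less_diff)
  ultimately show ?thesis using mul_bound'[of p1 N] mul_bound'[of p2 N] mul_bound'[of "\<lambda>i. p1 i - p2 i" N]
    by (simp add: sum_subtractf left_diff_distrib)
qed

lemma mul_smul_left: assumes "finsupp p"
  shows "mul (\<lambda>i. c * p i) q = (\<lambda>k. c * mul p q k)"
proof -
  obtain N where "deg_less p N" using assms finsupp_iff by blast
  moreover then have "deg_less (\<lambda>i. c * p i) N" by (rule deg_less_smul)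
  ultimately show ?thesis using mul_bound'[of p N] mul_bound'[of "\<lambda>i. c * p i" N]
    by (simp add: sum_distrib_left mult.assoc)
qed

lemma mul_add_right: "mul p (\<lambda>k. q1 k + q2 k) = (\<lambda>k. mul p q1 k + mul p q2 k)"
  unfolding skmult_def by (simp add: Tn_add sum.distrib distrib_left)

lemma mul_diff_right: "mul p (\<lambda>k. q1 k - q2 k) = (\<lambda>k. mul p q1 k - mul p q2 k)"
  unfolding skmult_def by (simp add: Tn_diff sum_subtractf right_diff_distrib)

lemma mul_zero_left: "mul (\<lambda>k. 0) q = (\<lambda>k. 0)"
  unfolding skmult_def by simp
lemma mul_zero_right: "mul p (\<lambda>k. 0) = (\<lambda>k. 0)"
  unfolding skmult_def by (simp add: Tn_zero)

lemma mul_sconst_left: "mul (sconst c) q = (\<lambda>k. c * q k)"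
  using mul_bound'[OF deg_less_sconst, of c q] by (simp add: sconst_def)

lemma mul_mon_left: "mul (mon j) q = (T ^^ j) q"
proof -
  have "mul (mon j) q = (\<lambda>k. \<Sum>i<Suc j. mon j i * (T ^^ i) q k)"
    using mul_bound'[OF deg_less_mon] by blast
  also have "\<dots> = (\<lambda>k. (T ^^ j) q k)"
    by (simp add: mon_def if_distrib cong: if_cong)
  finally show ?thesis by simp
qed

lemma T_mon: "T (mon j) = mon (Suc j)"
  unfolding tmul_def mon_def by (auto simp: fun_eq_iff)
lemma Tn_mon: "(T ^^ i) (mon j) = mon (j + i)"
  by (induction i) (auto simp: T_mon)

lemma T_mul: assumes "finsupp p" shows "T (mul p q) = mul (T p) q"
proof -
  obtain N where N: "deg_less p N" using assms finsupp_iff by blast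
  have NS: "deg_less (T p) (Suc N)" using deg_T[OF N] .
  have pN: "p N = 0" using N deg_lessD by blast
  have "T (mul p q) = (\<lambda>k. \<Sum>i<N. T (\<lambda>k. p i * (T ^^ i) q k) k)"
    using mul_bound'[OF N, of q] T_sum[of "{..<N}"] by simp
  also have "\<dots> = (\<lambda>k. \<Sum>i<N. \<sigma> (p i) * (T ^^ Suc i) q k + \<delta> (p i) * (T ^^ i) q k)"
    by (simp add: T_smul)
  also have "\<dots> = (\<lambda>k. \<Sum>i<Suc N. T p i * (T ^^ i) q k)"
  proof
    fix k
    have "(\<Sum>i<Suc N. T p i * (T ^^ i) q k) =
      (\<Sum>i<Suc N. (if i = 0 then 0 else \<sigma> (p (i - 1))) * (T ^^ i) q k) + (\<Sum>i<Suc N. \<delta> (p i) * (T ^^ i) q k)"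
      unfolding tmul_def by (simp add: distrib_right sum.distrib)
    also have "(\<Sum>i<Suc N. (if i = 0 then 0 else \<sigma> (p (i - 1))) * (T ^^ i) q k) = (\<Sum>i<N. \<sigma> (p i) * (T ^^ Suc i) q k)"
      by (subst sum.lessThan_Suc_shift) simp
    also have "(\<Sum>i<Suc N. \<delta> (p i) * (T ^^ i) q k) = (\<Sum>i<N. \<delta> (p i) * (T ^^ i) q k)"
      using pN by simp
    finally show "(\<Sum>i<N. \<sigma> (p i) * (T ^^ Suc i) q k + \<delta> (p i) * (T ^^ i) q k) = (\<Sum>i<Suc N. T p i * (T ^^ i) q k)"
      by (simp add: sum.distrib)
  qed
  also have "\<dots> = mul (T p) q" using mul_bound'[OF NS] by simp
  finally show ?thesis .
qed

lemma Tn_mul: assumes "finsupp p" shows "(T ^^ n) (mul p q) = mul ((T ^^ n) p) q"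
proof (induction n)
  case 0 then show ?case by simp
next
  case (Suc n) then show ?case using T_mul[OF finsupp_Tn[OF assms, of n]] by simp
qed

lemma mul_assoc: assumes "finsupp p" "finsupp q"
  shows "mul (mul p q) r = mul p (mul q r)"
proof -
  obtain N M where N: "deg_less p N" and M: "deg_less q M" using assms finsupp_iff by blast
  have PQ: "deg_less (mul p q) (N + M)" using deg_mul[OF N deg_less_mono[OF M]] by simp
  have Qi: "deg_less ((T ^^ i) q) (N + M)" if "i < N" for i
    using deg_Tn[OF M, of i] that deg_less_mono by fastforce
  show ?thesis
  proof
    fix k
    have "mul (mul p q) r k = (\<Sum>j<N+M. (\<Sum>i<N. p i * (T ^^ i) q j) * (T ^^ j) r k)"
      using mul_bound[OF PQ] mul_bound[OF N] by simp
    also have "\<dots> = (\<Sum>i<N. p i * (\<Sum>j<N+M. (T ^^ i) q j * (T ^^ j) r k))"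
      by (simp add: sum_distrib_left sum_distrib_right mult.assoc sum.swap[of _ "{..<N}"])
    also have "\<dots> = (\<Sum>i<N. p i * mul ((T ^^ i) q) r k)"
      using mul_bound[OF Qi] by simp
    also have "\<dots> = (\<Sum>i<N. p i * (T ^^ i) (mul q r) k)"
      using Tn_mul[OF assms(2)] by simp
    also have "\<dots> = mul p (mul q r) k" using mul_bound[OF N] by simp
    finally show "mul (mul p q) r k = mul p (mul q r) k" .
  qed
qed

end
context skew begin

lemma lead_gen: assumes g: "deg_less g (Suc M)" "g M = 1" and Q: "deg_less Q (Suc d)"
  shows "mul Q g (d + M) = Q d"
proof -
  have z: "(T ^^ i) g (d + M) = 0" if "i < d" for i
    using deg_Tn[OF g(1), of i] that deg_lessD by fastforce
  have t: "(T ^^ d) g (d + M) = 1" using Tn_top[OF g(1), of d] g(2) by (simp add: add.commute)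
  have "mul Q g (d + M) = (\<Sum>i<Suc d. Q i * (T ^^ i) g (d + M))" using mul_bound[OF Q] .
  also have "\<dots> = Q d" using z t by simp
  finally show ?thesis .
qed

end

locale petit = skew +
  fixes f :: "nat \<Rightarrow> 'a" and m :: nat
  assumes monic: "monic_deg f m" and m2: "m \<ge> 2"
begin

abbreviation rm where "rm \<equiv> rmod \<sigma> \<delta> f m"
abbreviation pm where "pm \<equiv> pmult \<sigma> \<delta> f m"

lemma f_m: "f m = 1" using monic unfolding monic_deg_def by blast
lemma f_deg: "deg_less f (Suc m)" using monic unfolding monic_deg_def deg_less_def by auto
lemma f_fin: "finsupp f" using f_deg deg_less_finsupp by blast

lemma lead: "deg_less Q (Suc d) \<Longrightarrow> mul Q f (d + m) = Q d"
  using lead_gen[OF f_deg f_m] .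

lemma quot_deg: assumes Q: "finsupp Q" and D: "deg_less (mul Q f) (m + M)"
  shows "deg_less Q M"
proof (rule ccontr)
  assume nd: "\<not> deg_less Q M"
  define S where "S = {i. M \<le> i \<and> Q i \<noteq> 0}"
  have "S \<noteq> {}" using nd unfolding S_def deg_less_def by auto
  moreover have "finite S" using Q unfolding finsupp_def S_def by (rule rev_finite_subset) auto
  ultimately have dS: "Max S \<in> S" using Max_in by blast
  define d where "d = Max S"
  have "deg_less Q (Suc d)" unfolding deg_less_def
  proof (intro allI impI)
    fix i assume "Suc d \<le> i"
    show "Q i = 0"
    proof (rule ccontr)
      assume "Q i \<noteq> 0"
      then have "i \<in> S" using dS \<open>Suc d \<le> i\<close> unfolding S_def d_def by auto
      then have "i \<le> d" unfolding d_def using Max_ge[OF \<open>finite S\<close>] by blast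
      then show False using \<open>Suc d \<le> i\<close> by simp
    qed
  qed
  then have "mul Q f (d + m) = Q d" by (rule lead)
  moreover have "Q d \<noteq> 0" "M \<le> d" using dS unfolding d_def S_def by auto
  moreover have "mul Q f (d + m) = 0" using D deg_lessD \<open>M \<le> d\<close> by fastforce
  ultimately show False by simp
qed

lemma div_ex: "deg_less g N \<Longrightarrow> \<exists>q r. finsupp q \<and> deg_less r m \<and> g = (\<lambda>k. mul q f k + r k)"
proof (induction N arbitrary: g)
  case 0
  then have "deg_less g m" using deg_less_mono by blast
  then show ?case using deg_less_finsupp[OF deg_less_zero[of 0]]
    by (intro exI[of _ "\<lambda>k. 0"] exI[of _ g]) (auto simp: mul_zero_left)
next
  case (Suc N)
  show ?case
  proof (cases "Suc N \<le> m")
    case True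
    then have "deg_less g m" using deg_less_mono Suc.prems by blast
    then show ?thesis using deg_less_finsupp[OF deg_less_zero[of 0]]
      by (intro exI[of _ "\<lambda>k. 0"] exI[of _ g]) (auto simp: mul_zero_left)
  next
    case False
    define c where "c = g N"
    define j where "j = N - m"
    have Nj: "N = m + j" using False unfolding j_def by simp
    define h where "h = (\<lambda>k. c * mon j k)"
    have hfin: "finsupp h" unfolding h_def using deg_less_mon deg_less_finsupp finsupp_smul by blast
    have mh: "mul h f = (\<lambda>k. c * (T ^^ j) f k)" unfolding h_def
      using mul_smul_left[OF deg_less_finsupp[OF deg_less_mon]] mul_mon_left by simp
    define g' where "g' = (\<lambda>k. g k - mul h f k)"
    have "deg_less g' N" unfolding deg_less_def
    proof (intro allI impI)
      fix k assume k: "N \<le> k"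
      show "g' k = 0"
      proof (cases "k = N")
        case True
        have "(T ^^ j) f (m + j) = 1" using Tn_top[OF f_deg, of j] f_m by simp
        then show ?thesis using True Nj unfolding g'_def mh c_def by simp
      next
        case False
        then have "Suc N \<le> k" using k by simp
        then have "g k = 0" "(T ^^ j) f k = 0" using Suc.prems deg_Tn[OF f_deg, of j] Nj deg_lessD
          by fastforce+
        then show ?thesis unfolding g'_def mh by simp
      qed
    qed
    then obtain q r where qr: "finsupp q" "deg_less r m" "g' = (\<lambda>k. mul q f k + r k)"
      using Suc.IH by blast
    have "mul (\<lambda>i. q i + h i) f = (\<lambda>k. mul q f k + mul h f k)"
      using mul_add_left[OF qr(1) hfin] .
    then have "g = (\<lambda>k. mul (\<lambda>i. q i + h i) f k + r k)"
      using qr(3) unfolding g'_def by (auto simp: fun_eq_iff algebra_simps dest: fun_cong)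
    then show ?thesis using finsupp_add[OF qr(1) hfin] qr(2) by blast
  qed
qed

lemma rmod_unique: assumes r: "deg_less r m" and q: "finsupp q" and g: "g = (\<lambda>k. mul q f k + r k)"
  shows "rm g = r"
  unfolding rmod_def
proof (rule the_equality)
  show "deg_less r m \<and> (\<exists>q. finsupp q \<and> g = (\<lambda>k. mul q f k + r k))" using r q g by blast
next
  fix r' assume "deg_less r' m \<and> (\<exists>q. finsupp q \<and> g = (\<lambda>k. mul q f k + r' k))"
  then obtain q' where r': "deg_less r' m" and q': "finsupp q'" and g': "g = (\<lambda>k. mul q' f k + r' k)"
    by blast
  have "mul (\<lambda>i. q i - q' i) f = (\<lambda>k. mul q f k - mul q' f k)" using mul_diff_left[OF q q'] .
  also have "\<dots> = (\<lambda>k. r' k - r k)"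
  proof
    fix k show "mul q f k - mul q' f k = r' k - r k"
      using fun_cong[OF g, of k] fun_cong[OF g', of k] by (simp add: algebra_simps)
  qed
  finally have "deg_less (mul (\<lambda>i. q i - q' i) f) (m + 0)" using deg_less_diff[OF r' r] by simp
  then have "deg_less (\<lambda>i. q i - q' i) 0" using quot_deg finsupp_diff[OF q q'] by blast
  then have "q = q'" unfolding deg_less_def by (auto simp: fun_eq_iff)
  then have "mul q f = mul q' f" by simp
  then show "r' = r" using g g' by (metis add_left_cancel ext)
qed

lemma rmod_spec: assumes "finsupp g"
  shows "deg_less (rm g) m" "\<exists>q. finsupp q \<and> g = (\<lambda>k. mul q f k + rm g k)"
proof -
  obtain N where "deg_less g N" using assms finsupp_iff by blast
  then obtain q r where qr: "finsupp q" "deg_less r m" "g = (\<lambda>k. mul q f k + r k)"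
    using div_ex by blast
  then have "rm g = r" using rmod_unique by blast
  then show "deg_less (rm g) m" "\<exists>q. finsupp q \<and> g = (\<lambda>k. mul q f k + rm g k)" using qr by auto
qed

lemma rmod_small: "deg_less g m \<Longrightarrow> rm g = g"
  by (rule rmod_unique[of g "\<lambda>k. 0"]) (auto simp: mul_zero_left deg_less_finsupp[OF deg_less_zero])

lemma rmod_zero: "rm (\<lambda>k. 0) = (\<lambda>k. 0)"
  by (rule rmod_small[OF deg_less_zero])

lemma rmod_mult: "finsupp q \<Longrightarrow> rm (mul q f) = (\<lambda>k. 0)"
  by (rule rmod_unique[OF deg_less_zero]) auto

lemma rmod_diff: assumes "finsupp g1" "finsupp g2"
  shows "rm (\<lambda>k. g1 k - g2 k) = (\<lambda>k. rm g1 k - rm g2 k)"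
proof -
  obtain q1 where q1: "finsupp q1" "g1 = (\<lambda>k. mul q1 f k + rm g1 k)" using rmod_spec[OF assms(1)] by blast
  obtain q2 where q2: "finsupp q2" "g2 = (\<lambda>k. mul q2 f k + rm g2 k)" using rmod_spec[OF assms(2)] by blast
  have "mul (\<lambda>i. q1 i - q2 i) f = (\<lambda>k. mul q1 f k - mul q2 f k)" using mul_diff_left[OF q1(1) q2(1)] .
  then have "(\<lambda>k. g1 k - g2 k) = (\<lambda>k. mul (\<lambda>i. q1 i - q2 i) f k + (rm g1 k - rm g2 k))"
    using q1(2) q2(2) by (auto simp: fun_eq_iff algebra_simps dest: fun_cong)
  then show ?thesis
    by (rule rmod_unique[OF deg_less_diff[OF rmod_spec(1)[OF assms(1)] rmod_spec(1)[OF assms(2)]] finsupp_diff[OF q1(1) q2(1)]])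
qed

lemma rmod_smul: assumes "finsupp g"
  shows "rm (\<lambda>k. c * g k) = (\<lambda>k. c * rm g k)"
proof -
  obtain q1 where q1: "finsupp q1" "g = (\<lambda>k. mul q1 f k + rm g k)" using rmod_spec[OF assms(1)] by blast
  have "mul (\<lambda>i. c * q1 i) f = (\<lambda>k. c * mul q1 f k)" using mul_smul_left[OF q1(1)] .
  then have "(\<lambda>k. c * g k) = (\<lambda>k. mul (\<lambda>i. c * q1 i) f k + c * rm g k)"
    using q1(2) by (auto simp: fun_eq_iff algebra_simps dest: fun_cong)
  then show ?thesis
    by (rule rmod_unique[OF deg_less_smul[OF rmod_spec(1)[OF assms(1)]] finsupp_smul[OF q1(1)]])
qed

end
context petit begin

lemma pm_def': "pm x y = rm (mul x y)" unfolding pmult_def ..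

lemma assoc_formula:
  assumes x: "deg_less x m" and y: "deg_less y m" and z: "deg_less z m"
    and Q: "finsupp Q" and xy: "mul x y = (\<lambda>k. mul Q f k + pm x y k)"
  shows "passoc \<sigma> \<delta> f m x y z = (\<lambda>k. - rm (mul Q (mul f z)) k)"
proof -
  have xf: "finsupp x" and yf: "finsupp y" and zf: "finsupp z" using x y z deg_less_finsupp by blast+
  have r': "pm x y = (\<lambda>k. mul x y k - mul Q f k)" using xy by (auto simp: fun_eq_iff dest: fun_cong)
  have A: "finsupp (mul x (mul y z))" using finsupp_mul xf yf zf by blast
  have B: "finsupp (mul Q (mul f z))" using finsupp_mul Q f_fin zf by blast
  have "pm (pm x y) z = rm (mul (pm x y) z)" by (rule pm_def')
  also have "\<dots> = rm (mul (\<lambda>k. mul x y k - mul Q f k) z)" by (simp only: r')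
  also have "mul (\<lambda>k. mul x y k - mul Q f k) z = (\<lambda>k. mul (mul x y) z k - mul (mul Q f) z k)"
    using mul_diff_left finsupp_mul xf yf Q f_fin by blast
  also have "\<dots> = (\<lambda>k. mul x (mul y z) k - mul Q (mul f z) k)"
    using mul_assoc xf yf Q f_fin by simp
  also have "rm \<dots> = (\<lambda>k. rm (mul x (mul y z)) k - rm (mul Q (mul f z)) k)"
    using rmod_diff[OF A B] .
  finally have L: "pm (pm x y) z = (\<lambda>k. rm (mul x (mul y z)) k - rm (mul Q (mul f z)) k)" .
  obtain Q2 where Q2: "finsupp Q2" "mul y z = (\<lambda>k. mul Q2 f k + rm (mul y z) k)"
    using rmod_spec(2)[OF finsupp_mul[OF yf zf]] by blast
  have r: "pm y z = (\<lambda>k. mul y z k - mul Q2 f k)" unfolding pm_def' using Q2(2)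
    by (auto simp: fun_eq_iff dest: fun_cong)
  have C: "finsupp (mul (mul x Q2) f)" using finsupp_mul xf Q2(1) f_fin by blast
  have "pm x (pm y z) = rm (mul x (pm y z))" by (rule pm_def')
  also have "\<dots> = rm (mul x (\<lambda>k. mul y z k - mul Q2 f k))" by (simp only: r)
  also have "mul x (\<lambda>k. mul y z k - mul Q2 f k) = (\<lambda>k. mul x (mul y z) k - mul (mul x Q2) f k)"
    using mul_diff_right mul_assoc[OF xf Q2(1)] by simp
  also have "rm \<dots> = (\<lambda>k. rm (mul x (mul y z)) k - rm (mul (mul x Q2) f) k)"
    using rmod_diff[OF A C] .
  also have "rm (mul (mul x Q2) f) = (\<lambda>k. 0)" using rmod_mult finsupp_mul xf Q2(1) by blast
  finally have R: "pm x (pm y z) = (\<lambda>k. rm (mul x (mul y z)) k)" by simp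
  show ?thesis unfolding passoc_def L R by simp
qed

lemma carrier_deg: "x \<in> petit_carrier m \<longleftrightarrow> deg_less x m" unfolding petit_carrier_def by simp

lemma sconst_carrier: "sconst a \<in> petit_carrier m"
  unfolding carrier_deg by (rule deg_less_mono[OF deg_less_sconst]) (use m2 in simp)

lemma quot_exists: assumes "deg_less x m" "deg_less y m"
  obtains Q where "finsupp Q" "mul x y = (\<lambda>k. mul Q f k + pm x y k)"
  using rmod_spec(2)[OF finsupp_mul[OF deg_less_finsupp deg_less_finsupp]] assms pm_def' by metis

lemma small_assoc: assumes x: "deg_less x m" and y: "deg_less y m" and z: "deg_less z m"
  and s: "deg_less (mul x y) m"
  shows "passoc \<sigma> \<delta> f m x y z = (\<lambda>k. 0)"
proof -
  have "mul x y = (\<lambda>k. mul (\<lambda>k. 0) f k + pm x y k)"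
    unfolding pm_def' rmod_small[OF s] by (simp add: mul_zero_left)
  from assoc_formula[OF x y z deg_less_finsupp[OF deg_less_zero] this]
  show ?thesis by (simp add: mul_zero_left rmod_zero)
qed

lemma D_nuc_l: "range sconst \<subseteq> nuc_l \<sigma> \<delta> f m"
proof
  fix x :: "nat \<Rightarrow> 'a" assume "x \<in> range sconst"
  then obtain a where xa: "x = sconst a" by blast
  have xm: "deg_less x m" using sconst_carrier xa carrier_deg by blast
  show "x \<in> nuc_l \<sigma> \<delta> f m" unfolding nuc_l_def
  proof (intro CollectI conjI ballI)
    show "x \<in> petit_carrier m" using xm carrier_deg by blast
    fix y z :: "nat \<Rightarrow> 'a" assume "y \<in> petit_carrier m" "z \<in> petit_carrier m"
    then have y: "deg_less y m" and z: "deg_less z m" using carrier_deg by blast+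
    have "deg_less y (Suc (m - 1))" using y m2 by simp
    from deg_mul[OF deg_less_sconst this, of a] have "deg_less (mul x y) m" using m2 xa by simp
    then show "passoc \<sigma> \<delta> f m x y z = (\<lambda>k. 0)" using small_assoc xm y z by blast
  qed
qed

lemma D_nuc_m: "range sconst \<subseteq> nuc_m \<sigma> \<delta> f m"
proof
  fix x :: "nat \<Rightarrow> 'a" assume "x \<in> range sconst"
  then obtain a where xa: "x = sconst a" by blast
  have xm: "deg_less x m" using sconst_carrier xa carrier_deg by blast
  show "x \<in> nuc_m \<sigma> \<delta> f m" unfolding nuc_m_def
  proof (intro CollectI conjI ballI)
    show "x \<in> petit_carrier m" using xm carrier_deg by blast
    fix y z :: "nat \<Rightarrow> 'a" assume "y \<in> petit_carrier m" "z \<in> petit_carrier m"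
    then have y: "deg_less y m" and z: "deg_less z m" using carrier_deg by blast+
    from deg_mul[OF y deg_less_sconst, of a] have "deg_less (mul y x) m" using xa by simp
    then show "passoc \<sigma> \<delta> f m y x z = (\<lambda>k. 0)" using small_assoc xm y z by blast
  qed
qed

lemma semi_nuc_r: assumes "right_semi_invariant \<sigma> \<delta> f" shows "range sconst \<subseteq> nuc_r \<sigma> \<delta> f m"
proof
  fix x :: "nat \<Rightarrow> 'a" assume "x \<in> range sconst"
  then obtain a where xa: "x = sconst a" by blast
  have xm: "deg_less x m" using sconst_carrier xa carrier_deg by blast
  obtain b where b: "mul f (sconst a) = mul (sconst b) f"
    using assms unfolding right_semi_invariant_def by blast
  show "x \<in> nuc_r \<sigma> \<delta> f m" unfolding nuc_r_def
  proof (intro CollectI conjI ballI)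
    show "x \<in> petit_carrier m" using xm carrier_deg by blast
    fix y z :: "nat \<Rightarrow> 'a" assume "y \<in> petit_carrier m" "z \<in> petit_carrier m"
    then have y: "deg_less y m" and z: "deg_less z m" using carrier_deg by blast+
    obtain Q where Q: "finsupp Q" "mul y z = (\<lambda>k. mul Q f k + pm y z k)" using quot_exists y z by blast
    have fin: "finsupp (sconst b)" using deg_less_finsupp deg_less_sconst by blast
    have "mul Q (mul f x) = mul (mul Q (sconst b)) f" using b xa mul_assoc[OF Q(1) fin] by simp
    then have "rm (mul Q (mul f x)) = (\<lambda>k. 0)" using rmod_mult finsupp_mul[OF Q(1) fin] by simp
    then show "passoc \<sigma> \<delta> f m y z x = (\<lambda>k. 0)" using assoc_formula[OF y z xm Q] by simp
  qed
qed

end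
context petit begin

lemma nuc_r_semi: assumes "range sconst \<subseteq> nuc_r \<sigma> \<delta> f m" shows "right_semi_invariant \<sigma> \<delta> f"
  unfolding right_semi_invariant_def
proof
  fix a
  define x :: "nat \<Rightarrow> 'a" where "x = sconst a"
  have xm: "deg_less x m" using sconst_carrier x_def carrier_deg by blast
  have y: "deg_less (mon (m - 1)) m" using deg_less_mon[of "m - 1"] m2 by simp
  have z: "deg_less (mon 1) m" using deg_less_mon[of 1] m2 by (auto intro: deg_less_mono)
  have yz: "mul (mon (m - 1)) (mon 1) = mon m" using mul_mon_left Tn_mon m2 by simp
  have rdeg: "deg_less (\<lambda>k. mon m k - f k) m" unfolding deg_less_def
  proof (intro allI impI)
    fix k assume "m \<le> k"
    then show "mon m k - f k = 0" using f_m f_deg deg_lessD[OF f_deg, of k] unfolding mon_def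
      by (cases "k = m") auto
  qed
  have fin1: "finsupp (sconst (1::'a))" using deg_less_finsupp deg_less_sconst by blast
  have eq: "mon m = (\<lambda>k. mul (sconst 1) f k + (mon m k - f k))" by (simp add: mul_sconst_left)
  have pmyz: "pm (mon (m - 1)) (mon 1) = (\<lambda>k. mon m k - f k)"
    unfolding pm_def' yz by (rule rmod_unique[OF rdeg fin1 eq])
  have "mul (mon (m - 1)) (mon 1) = (\<lambda>k. mul (sconst 1) f k + pm (mon (m - 1)) (mon 1) k)"
    unfolding pmyz yz using eq .
  from assoc_formula[OF y z xm fin1 this]
  have "passoc \<sigma> \<delta> f m (mon (m - 1)) (mon 1) x = (\<lambda>k. - rm (mul (sconst 1) (mul f x)) k)" .
  moreover have "passoc \<sigma> \<delta> f m (mon (m - 1)) (mon 1) x = (\<lambda>k. 0)"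
    using assms x_def y z carrier_deg unfolding nuc_r_def by blast
  ultimately have "rm (mul f x) = (\<lambda>k. 0)"
    by (auto simp: mul_sconst_left fun_eq_iff dest: fun_cong)
  moreover obtain Q where Q: "finsupp Q" "mul f x = (\<lambda>k. mul Q f k + rm (mul f x) k)"
    using rmod_spec(2)[OF finsupp_mul[OF f_fin deg_less_finsupp[OF xm]]] by blast
  ultimately have fx: "mul f x = mul Q f" by simp
  have "deg_less (mul f x) (Suc m + 0)" using deg_mul[OF f_deg] x_def deg_less_sconst by blast
  then have "deg_less (mul Q f) (m + 1)" using fx by simp
  then have "deg_less Q 1" using quot_deg Q(1) by blast
  then have "Q = sconst (Q 0)" unfolding deg_less_def sconst_def by (auto simp: fun_eq_iff)
  then show "\<exists>b. mul f (sconst a) = mul (sconst b) f" using fx x_def by metis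
qed

lemma nonconst_assoc:
  assumes x: "x \<in> nuc_l \<sigma> \<delta> f m" and nc: "\<not> (\<forall>i\<ge>1. x i = 0)"
  shows "petit_associative \<sigma> \<delta> f m"
proof -
  have xm: "deg_less x m" using x unfolding nuc_l_def carrier_deg by blast
  define S where "S = {i. 1 \<le> i \<and> x i \<noteq> 0}"
  have "S \<noteq> {}" using nc unfolding S_def by auto
  moreover have "finite S" using deg_less_finsupp[OF xm] unfolding finsupp_def S_def
    by (rule rev_finite_subset) auto
  ultimately have dS: "Max S \<in> S" using Max_in by blast
  define d where "d = Max S"
  have d1: "1 \<le> d" and xd: "x d \<noteq> 0" using dS unfolding d_def S_def by auto
  have dm: "d < m" using xd xm deg_lessD not_less by blast
  have xd1: "deg_less x (Suc d)" unfolding deg_less_def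
  proof (intro allI impI)
    fix i assume "Suc d \<le> i"
    show "x i = 0"
    proof (rule ccontr)
      assume "x i \<noteq> 0"
      then have "i \<in> S" using d1 \<open>Suc d \<le> i\<close> unfolding S_def by auto
      then have "i \<le> d" unfolding d_def using Max_ge[OF \<open>finite S\<close>] by blast
      then show False using \<open>Suc d \<le> i\<close> by simp
    qed
  qed
  define y :: "nat \<Rightarrow> 'a" where "y = mon (m - d)"
  have ym: "deg_less y m" unfolding y_def by (rule deg_less_mono[OF deg_less_mon]) (use d1 dm in simp)
  have xyd: "mul x y m = x d" using lead_gen[OF deg_less_mon[of "m - d"] _ xd1] dm unfolding y_def
    by (simp add: mon_def)
  have xyb: "deg_less (mul x y) (Suc m)" using deg_mul[OF xd1 deg_less_mon[of "m - d"]] dm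
    unfolding y_def by simp
  have rdeg: "deg_less (\<lambda>k. mul x y k - x d * f k) m" unfolding deg_less_def
  proof (intro allI impI)
    fix k assume "m \<le> k"
    show "mul x y k - x d * f k = 0"
    proof (cases "k = m")
      case True then show ?thesis using xyd f_m by simp
    next
      case False then have "Suc m \<le> k" using \<open>m \<le> k\<close> by simp
      then show ?thesis using deg_lessD[OF xyb] deg_lessD[OF f_deg] by simp
    qed
  qed
  have fin: "finsupp (sconst (x d))" using deg_less_finsupp deg_less_sconst by blast
  have eq: "mul x y = (\<lambda>k. mul (sconst (x d)) f k + (mul x y k - x d * f k))"
    by (simp add: mul_sconst_left)
  have pmxy: "pm x y = (\<lambda>k. mul x y k - x d * f k)"
    unfolding pm_def' by (rule rmod_unique[OF rdeg fin eq])
  have eq2: "mul x y = (\<lambda>k. mul (sconst (x d)) f k + pm x y k)" using eq unfolding pmxy .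
  have fz0: "rm (mul f z) = (\<lambda>k. 0)" if zm: "deg_less z m" for z
  proof -
    have "passoc \<sigma> \<delta> f m x y z = (\<lambda>k. - rm (mul (sconst (x d)) (mul f z)) k)"
      using assoc_formula[OF xm ym zm fin eq2] .
    moreover have "passoc \<sigma> \<delta> f m x y z = (\<lambda>k. 0)"
      using x ym zm carrier_deg unfolding nuc_l_def by blast
    moreover have "rm (mul (sconst (x d)) (mul f z)) = (\<lambda>k. x d * rm (mul f z) k)"
      unfolding mul_sconst_left
      using rmod_smul[OF finsupp_mul[OF f_fin deg_less_finsupp[OF zm]]] .
    ultimately have "\<forall>k. x d * rm (mul f z) k = 0" by (auto simp: fun_eq_iff dest: fun_cong)
    then show ?thesis using xd by (auto simp: fun_eq_iff)
  qed
  show ?thesis unfolding petit_associative_def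
  proof (intro ballI)
    fix x' y' z' :: "nat \<Rightarrow> 'a"
    assume "x' \<in> petit_carrier m" "y' \<in> petit_carrier m" "z' \<in> petit_carrier m"
    then have x': "deg_less x' m" and y': "deg_less y' m" and z': "deg_less z' m"
      using carrier_deg by blast+
    obtain Q where Q: "finsupp Q" "mul x' y' = (\<lambda>k. mul Q f k + pm x' y' k)"
      using quot_exists x' y' by blast
    obtain P where P: "finsupp P" "mul f z' = (\<lambda>k. mul P f k + rm (mul f z') k)"
      using rmod_spec(2)[OF finsupp_mul[OF f_fin deg_less_finsupp[OF z']]] by blast
    have "mul f z' = mul P f" using P(2) fz0[OF z'] by simp
    then have "mul Q (mul f z') = mul (mul Q P) f" using mul_assoc[OF Q(1) P(1)] by simp
    then have "rm (mul Q (mul f z')) = (\<lambda>k. 0)" using rmod_mult finsupp_mul[OF Q(1) P(1)] by simp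
    then show "passoc \<sigma> \<delta> f m x' y' z' = (\<lambda>k. 0)" using assoc_formula[OF x' y' z' Q] by simp
  qed
qed

lemma main:
  "(right_semi_invariant \<sigma> \<delta> f \<longleftrightarrow> range sconst \<subseteq> nuc_r \<sigma> \<delta> f m) \<and>
   (right_semi_invariant \<sigma> \<delta> f \<longrightarrow> nuc \<sigma> \<delta> f m = range sconst \<or> petit_associative \<sigma> \<delta> f m)"
proof (intro conjI impI iffI)
  assume ri: "right_semi_invariant \<sigma> \<delta> f"
  show "nuc \<sigma> \<delta> f m = range sconst \<or> petit_associative \<sigma> \<delta> f m"
  proof (cases "petit_associative \<sigma> \<delta> f m")
    case True then show ?thesis by blast
  next
    case False
    have "range sconst \<subseteq> nuc \<sigma> \<delta> f m"
      using D_nuc_l D_nuc_m semi_nuc_r[OF ri] unfolding nuc_def by blast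
    moreover have "nuc \<sigma> \<delta> f m \<subseteq> range sconst"
    proof
      fix x assume xn: "x \<in> nuc \<sigma> \<delta> f m"
      then have xl: "x \<in> nuc_l \<sigma> \<delta> f m" unfolding nuc_def by blast
      have "\<forall>i\<ge>1. x i = 0" using nonconst_assoc[OF xl] False by blast
      then have "x = sconst (x 0)" unfolding sconst_def by (auto simp: fun_eq_iff)
      then show "x \<in> range sconst" by (metis rangeI)
    qed
    ultimately show ?thesis by blast
  qed
qed (use semi_nuc_r nuc_r_semi in blast)+

end

theorem mainTheorem1:
  fixes \<sigma> \<delta> :: "'a::division_ring \<Rightarrow> 'a" and f :: "nat \<Rightarrow> 'a" and m :: nat
  assumes "ring_endo \<sigma>" and "left_sigma_derivation \<sigma> \<delta>"
    and "monic_deg f m" and "m \<ge> 2"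
  shows "(right_semi_invariant \<sigma> \<delta> f \<longleftrightarrow> range sconst \<subseteq> nuc_r \<sigma> \<delta> f m) \<and>
         (right_semi_invariant \<sigma> \<delta> f \<longrightarrow>
            nuc \<sigma> \<delta> f m = range sconst \<or> petit_associative \<sigma> \<delta> f m)"
proof -
  interpret petit \<sigma> \<delta> f m using assms by (unfold_locales) auto
  show ?thesis by (rule main)
qed

end
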